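(* Let $\varepsilon>0$ and let $f$ be continuous on $[0,1]$. Let $u\in H^1_0(0,1)$ be the solution of $$\varepsilon\,(u',v')+(u',v)=(f,v)\quad\text{for all } v\in H^1_0(0,1).$$ Let $n\ge 2$, $h=1/n$, $x_j=jh$ ($j=0,\dots,n$). Let $\mathcal{M}_h\subset H^1_0(0,1)$ be the space of continuous functions on $[0,1]$ that are linear on each $[x_{j-1},x_j]$ and vanish at $0$ and $1$, and let $V_h\subset H^1_0(0,1)$ be the space of continuous functions on $[0,1]$ that are quadratic polynomials on each $[x_{j-1},x_j]$ and vanish at $0$ and $1$. Let $(w_h,u_h)\in V_h\times\mathcal{M}_h$ be the solution of the saddle point least squares ($P^1$–$P^2$) discretization $$\begin{aligned} (w_h',v_h')+\varepsilon\,(u_h',v_h')+(u_h',v_h)&=(f,v_h)&&\text{for all } v_h\in V_h,\\ \varepsilon\,(q_h',w_h')+(q_h',w_h)&=0&&\text{for all } q_h\in\mathcal{M}_h. \end{aligned}$$ For $v\in H^1_0(0,1)$ define $\|v\|_*^2:=\varepsilon^2\|v'\|^2+\|v\|^2-\overline{v}^2$, where $\|\cdot\|$ is the $L^2(0,1)$ norm and $\overline{v}=\int_0^1 v(x)\,dx$. Then $$\|u-u_h\|_*\le \inf_{p_h\in\mathcal{M}_h}\|u-p_h\|_*\le \|u-u_I\|_*,$$ where $u_I\in\mathcal{M}_h$ is the linear interpolant of $u$ at the nodes $x_0,\dots,x_n$.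
   Context: $(\cdot,\cdot)$ denotes the $L^2(0,1)$ inner product. Note $\|v\|^2-\overline{v}^2=\|v-\overline{v}\|^2$, so $\|\cdot\|_*$ is a norm on $H^1_0(0,1)$. *)

theory Defs
  imports "HOL-Analysis.Analysis"
begin

definition ip :: "(real \<Rightarrow> real) \<Rightarrow> (real \<Rightarrow> real) \<Rightarrow> real" where
  "ip f g = (LINT x:{0..1}|lborel. f x * g x)"

definition L2norm :: "(real \<Rightarrow> real) \<Rightarrow> real" where
  "L2norm f = sqrt (ip f f)"

definition mean :: "(real \<Rightarrow> real) \<Rightarrow> real" where
  "mean v = (LINT x:{0..1}|lborel. v x)"

definition L2 :: "(real \<Rightarrow> real) \<Rightarrow> bool" where
  "L2 g \<longleftrightarrow> set_borel_measurable lborel {0..1} g \<and> set_integrable lborel {0..1} (\<lambda>x. (g x)^2)"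

text \<open>v belongs to H^1_0(0,1) with weak derivative dv: v is (on [0,1]) the
  primitive of the square-integrable dv, vanishing at 0 and 1.\<close>
definition H10 :: "(real \<Rightarrow> real) \<Rightarrow> (real \<Rightarrow> real) \<Rightarrow> bool" where
  "H10 v dv \<longleftrightarrow> L2 dv \<and> (\<forall>x\<in>{0..1}. v x = (LINT t:{0..x}|lborel. dv t)) \<and> v 1 = 0"

definition Mh :: "nat \<Rightarrow> (real \<Rightarrow> real) \<Rightarrow> bool" where
  "Mh n p \<longleftrightarrow> continuous_on {0..1} p \<and> p 0 = 0 \<and> p 1 = 0 \<and>
     (\<forall>j\<in>{1..n}. \<exists>a b. \<forall>x\<in>{real (j-1)/real n..real j/real n}. p x = a + b * x)"

definition Vh :: "nat \<Rightarrow> (real \<Rightarrow> real) \<Rightarrow> bool" where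
  "Vh n p \<longleftrightarrow> continuous_on {0..1} p \<and> p 0 = 0 \<and> p 1 = 0 \<and>
     (\<forall>j\<in>{1..n}. \<exists>a b c. \<forall>x\<in>{real (j-1)/real n..real j/real n}. p x = a + b * x + c * x^2)"

definition snorm :: "real \<Rightarrow> (real \<Rightarrow> real) \<Rightarrow> (real \<Rightarrow> real) \<Rightarrow> real" where
  "snorm eps v dv = sqrt (eps^2 * (L2norm dv)^2 + (L2norm v)^2 - (mean v)^2)"

end

theory Submission
  imports Defs
begin


lemma sbm_mult:
  fixes f g :: "real \<Rightarrow> real"
  assumes "set_borel_measurable lborel S f" "set_borel_measurable lborel S g"
  shows "set_borel_measurable lborel S (\<lambda>x. f x * g x)"
proof -
  have "(\<lambda>x. (indicator S x *\<^sub>R f x) * (indicator S x *\<^sub>R g x)) \<in> borel_measurable lborel"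
    using assms unfolding set_borel_measurable_def by (intro borel_measurable_times borel_measurable_add borel_measurable_const) auto
  moreover have "(\<lambda>x. (indicator S x *\<^sub>R f x) * (indicator S x *\<^sub>R g x)) = (\<lambda>x. indicator S x *\<^sub>R (f x * g x))"
    by (auto simp: indicator_def)
  ultimately show ?thesis unfolding set_borel_measurable_def by simp
qed

lemma sbm_add:
  fixes f g :: "real \<Rightarrow> real"
  assumes "set_borel_measurable lborel S f" "set_borel_measurable lborel S g"
  shows "set_borel_measurable lborel S (\<lambda>x. f x + g x)"
proof -
  have "(\<lambda>x. (indicator S x *\<^sub>R f x) + (indicator S x *\<^sub>R g x)) \<in> borel_measurable lborel"
    using assms unfolding set_borel_measurable_def by (intro borel_measurable_times borel_measurable_add borel_measurable_const) auto
  moreover have "(\<lambda>x. (indicator S x *\<^sub>R f x) + (indicator S x *\<^sub>R g x)) = (\<lambda>x. indicator S x *\<^sub>R (f x + g x))"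
    by (auto simp: indicator_def)
  ultimately show ?thesis unfolding set_borel_measurable_def by simp
qed

lemma sbm_scale:
  fixes f :: "real \<Rightarrow> real"
  assumes "set_borel_measurable lborel S f"
  shows "set_borel_measurable lborel S (\<lambda>x. c * f x)"
proof -
  have "(\<lambda>x. c * (indicator S x *\<^sub>R f x)) \<in> borel_measurable lborel"
    using assms unfolding set_borel_measurable_def by (intro borel_measurable_times borel_measurable_add borel_measurable_const) auto
  moreover have "(\<lambda>x. c * (indicator S x *\<^sub>R f x)) = (\<lambda>x. indicator S x *\<^sub>R (c * f x))"
    by (auto simp: indicator_def)
  ultimately show ?thesis unfolding set_borel_measurable_def by simp
qed

lemma sbm_const: "set_borel_measurable lborel {0..1::real} (\<lambda>x. c::real)"
  unfolding set_borel_measurable_def by (intro borel_measurable_scaleR borel_measurable_const borel_measurable_indicator) auto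

lemma L2_const: "L2 (\<lambda>x. c)"
  unfolding L2_def
  using sbm_const set_integral_const
  by (auto simp: set_integrable_def intro!: integrable_mult_indicator[where f="\<lambda>_. c^2", simplified] )

lemma L2_mult_int:
  assumes "L2 f" "L2 g"
  shows "set_integrable lborel {0..1} (\<lambda>x. f x * g x)"
proof -
  have i1: "integrable lborel (\<lambda>x. indicator {0..1::real} x *\<^sub>R (f x ^ 2 + g x ^ 2))"
    using assms unfolding L2_def set_integrable_def
    by (simp add: distrib_left)
  have m: "(\<lambda>x. indicator {0..1::real} x *\<^sub>R (f x * g x)) \<in> borel_measurable lborel"
    using sbm_mult assms unfolding L2_def set_borel_measurable_def by blast
  show ?thesis unfolding set_integrable_def
  proof (rule Bochner_Integration.integrable_bound[OF i1 m], rule AE_I2)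
    fix x
    have "2 * \<bar>f x * g x\<bar> \<le> f x ^ 2 + g x ^ 2"
      using sum_squares_bound[of "f x" "g x"] sum_squares_bound[of "- f x" "g x"] by (auto simp: abs_if)
    then show "norm (indicator {0..1::real} x *\<^sub>R (f x * g x)) \<le> norm (indicator {0..1::real} x *\<^sub>R (f x ^ 2 + g x ^ 2))"
      by (auto simp: indicator_def)
  qed
qed

lemma L2_int: "L2 f \<Longrightarrow> set_integrable lborel {0..1} f"
  using L2_mult_int[of f "\<lambda>x. 1"] L2_const by simp

lemma L2_add: assumes "L2 f" "L2 g" shows "L2 (\<lambda>x. f x + g x)"
proof -
  have "set_integrable lborel {0..1} (\<lambda>x. f x * f x + 2 * (f x * g x) + g x * g x)"
    using L2_mult_int[OF assms(1) assms(1)] L2_mult_int[OF assms(1) assms(2)] L2_mult_int[OF assms(2) assms(2)]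
    by (intro set_integral_add) auto
  moreover have "(\<lambda>x. (f x + g x)^2) = (\<lambda>x. f x * f x + 2 * (f x * g x) + g x * g x)"
    by (auto simp: power2_eq_square algebra_simps)
  ultimately show ?thesis using assms unfolding L2_def by (auto intro: sbm_add)
qed

lemma L2_scale: assumes "L2 f" shows "L2 (\<lambda>x. c * f x)"
proof -
  have "set_integrable lborel {0..1} (\<lambda>x. c^2 * (f x)^2)"
    using assms unfolding L2_def by auto
  then show ?thesis using assms unfolding L2_def by (auto intro: sbm_scale simp: power_mult_distrib)
qed

lemma L2_diff: assumes "L2 f" "L2 g" shows "L2 (\<lambda>x. f x - g x)"
  using L2_add[OF assms(1) L2_scale[OF assms(2), of "-1"]] by simp

lemma ip_sym: "ip f g = ip g f"
  unfolding ip_def by (simp add: mult.commute)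

lemma ip_add_left: "L2 f \<Longrightarrow> L2 g \<Longrightarrow> L2 h \<Longrightarrow> ip (\<lambda>x. f x + g x) h = ip f h + ip g h"
  unfolding ip_def using L2_mult_int[of f h] L2_mult_int[of g h]
  by (simp add: distrib_right)

lemma ip_diff_left: "L2 f \<Longrightarrow> L2 g \<Longrightarrow> L2 h \<Longrightarrow> ip (\<lambda>x. f x - g x) h = ip f h - ip g h"
  unfolding ip_def using L2_mult_int[of f h] L2_mult_int[of g h]
  by (simp add: left_diff_distrib)

lemma ip_scale_left: "ip (\<lambda>x. c * f x) h = c * ip f h"
  unfolding ip_def by (simp add: mult.assoc)

lemma ip_const_left: "ip (\<lambda>x. c) h = c * mean h"
  unfolding ip_def mean_def by simp

lemma ip_add_right: "L2 f \<Longrightarrow> L2 g \<Longrightarrow> L2 h \<Longrightarrow> ip h (\<lambda>x. f x + g x) = ip h f + ip h g"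
  using ip_add_left ip_sym by metis

lemma ip_diff_right: "L2 f \<Longrightarrow> L2 g \<Longrightarrow> L2 h \<Longrightarrow> ip h (\<lambda>x. f x - g x) = ip h f - ip h g"
  using ip_diff_left ip_sym by metis

lemma ip_scale_right: "ip h (\<lambda>x. c * f x) = c * ip h f"
  using ip_scale_left ip_sym by metis

lemma ip_const_right: "ip h (\<lambda>x. c) = c * mean h"
  using ip_const_left ip_sym by metis

lemma mean_add: "L2 f \<Longrightarrow> L2 g \<Longrightarrow> mean (\<lambda>x. f x + g x) = mean f + mean g"
  unfolding mean_def using L2_int by simp

lemma mean_diff: "L2 f \<Longrightarrow> L2 g \<Longrightarrow> mean (\<lambda>x. f x - g x) = mean f - mean g"
  unfolding mean_def using L2_int by simp

lemma mean_const: "mean (\<lambda>x. c) = c"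
  unfolding mean_def by (simp add: set_integral_const)

lemma ip_nonneg: "ip f f \<ge> 0"
  unfolding ip_def set_lebesgue_integral_def
  by (rule integral_nonneg_AE) (auto simp: indicator_def)

lemma var_nonneg: assumes "L2 f" shows "ip f f - (mean f)^2 \<ge> 0"
proof -
  let ?c = "mean f"
  have L: "L2 (\<lambda>x. f x - ?c)" using assms L2_const L2_diff by blast
  have "0 \<le> ip (\<lambda>x. f x - ?c) (\<lambda>x. f x - ?c)" by (rule ip_nonneg)
  also have "\<dots> = ip f (\<lambda>x. f x - ?c) - ?c * mean (\<lambda>x. f x - ?c)"
    using ip_diff_left[OF assms L2_const L] ip_const_left by simp
  also have "\<dots> = ip f f - ?c * mean f - ?c * (mean f - ?c)"
    using ip_diff_right[OF assms L2_const assms] ip_const_right mean_diff[OF assms L2_const] mean_const by simp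
  finally show ?thesis by (simp add: power2_eq_square algebra_simps)
qed



lemma LINT_eq_integral:
  fixes g :: "real \<Rightarrow> real"
  assumes "set_integrable lborel {0..1::real} g" "x \<in> {0..1}"
  shows "(LINT t:{0..x}|lborel. g t) = integral {0..x} g"
proof -
  have "set_integrable lborel {0..x} g"
    by (rule set_integrable_subset[OF assms(1)]) (use assms in auto)
  then show ?thesis by (rule set_borel_integral_eq_integral(2))
qed

lemma H10_cont: assumes "H10 v dv" shows "continuous_on {0..1} v"
proof -
  have si: "set_integrable lborel {0..1::real} dv" using assms L2_int unfolding H10_def by blast
  have "dv integrable_on {0..1}" using set_borel_integral_eq_integral(1)[OF si] .
  then have c: "continuous_on {0..1} (\<lambda>x. integral {0..x} dv)" by (rule indefinite_integral_continuous_1)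
  have e: "integral {0..x} dv = v x" if "x \<in> {0..1}" for x
    using assms LINT_eq_integral[OF si that] that unfolding H10_def by auto
  show ?thesis by (rule continuous_on_eq[OF c e])
qed

lemma cont_L2: assumes "continuous_on {0..1} v" shows "L2 v"
proof -
  have "(\<lambda>x. indicator {0..1::real} x *\<^sub>R v x) \<in> borel_measurable borel"
    using assms by (intro borel_measurable_continuous_on_indicator) auto
  moreover have "integrable lborel (\<lambda>x. indicator {0..1::real} x *\<^sub>R (v x)^2)"
    by (rule borel_integrable_compact) (auto intro!: continuous_on_power assms)
  ultimately show ?thesis unfolding L2_def set_borel_measurable_def set_integrable_def measurable_lborel2 by blast
qed

lemma H10_L2: "H10 v dv \<Longrightarrow> L2 v" using H10_cont cont_L2 by blast
lemma H10_L2d: "H10 v dv \<Longrightarrow> L2 dv" unfolding H10_def by blast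

lemma H10_diff: assumes "H10 v dv" "H10 w dw"
  shows "H10 (\<lambda>x. v x - w x) (\<lambda>x. dv x - dw x)"
proof -
  have a: "set_integrable lborel {0..1::real} dv" "set_integrable lborel {0..1::real} dw"
    using assms L2_int unfolding H10_def by blast+
  have "(LINT t:{0..x}|lborel. dv t - dw t) = (LINT t:{0..x}|lborel. dv t) - (LINT t:{0..x}|lborel. dw t)" if x: "x \<in> {0..1}" for x
  proof -
    have "set_integrable lborel {0..x} dv"
      by (rule set_integrable_subset[OF a(1)]) (use x in auto)
    moreover have "set_integrable lborel {0..x} dw"
      by (rule set_integrable_subset[OF a(2)]) (use x in auto)
    ultimately show ?thesis by simp
  qed
  moreover have "L2 (\<lambda>x. dv x - dw x)" using assms L2_diff unfolding H10_def by blast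
  ultimately show ?thesis using assms unfolding H10_def by simp
qed

lemma H10_mean_deriv: assumes "H10 v dv" shows "mean dv = 0"
proof -
  have "v 1 = (LINT t:{0..1}|lborel. dv t)" "v 1 = 0" using assms unfolding H10_def by auto
  then show ?thesis unfolding mean_def by simp
qed

lemma H10_zero: assumes "H10 v dv" shows "v 0 = 0"
proof -
  have si: "set_integrable lborel {0..1::real} dv" using assms L2_int unfolding H10_def by blast
  have "v 0 = (LINT t:{0..0}|lborel. dv t)" using assms unfolding H10_def by auto
  also have "\<dots> = integral {0..0} dv" using LINT_eq_integral[OF si, of 0] by simp
  finally show ?thesis by simp
qed



lemma L2_integrable: "L2 f \<Longrightarrow> integrable lborel (\<lambda>x. indicator {0..1::real} x * f x)"
  using L2_int[of f] unfolding set_integrable_def by simp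

lemma ibp:
  assumes hf: "H10 f df" and hg: "H10 g dg"
  shows "ip df g + ip f dg = 0"
proof -
  define I where "I = (indicator {0..1::real} :: real \<Rightarrow> real)"
  define F where "F x = I x * df x" for x
  define G where "G t = I t * dg t" for t
  define H where "H x t = F x * (G t * (if t \<le> x then 1 else 0 :: real))" for x t
  have iF: "integrable lborel F" unfolding F_def I_def using L2_integrable H10_L2d[OF hf] by blast
  have iG: "integrable lborel G" unfolding G_def I_def using L2_integrable H10_L2d[OF hg] by blast
  have [measurable]: "F \<in> borel_measurable borel" "G \<in> borel_measurable borel"
    using iF iG by auto
  have mK: "(\<lambda>p. F (fst p) * G (snd p)) \<in> borel_measurable (lborel \<Otimes>\<^sub>M lborel)"
    by measurable
  have mH: "(case_prod H) \<in> borel_measurable (lborel \<Otimes>\<^sub>M lborel)"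
    unfolding H_def case_prod_beta' by measurable
  have iK: "integrable (lborel \<Otimes>\<^sub>M lborel) (\<lambda>p. F (fst p) * G (snd p))"
  proof (rule lborel_pair.Fubini_integrable[OF mK])
    have "(\<lambda>x. \<integral>y. norm (F (fst (x, y)) * G (snd (x, y))) \<partial>lborel) = (\<lambda>x. \<bar>F x\<bar> * (\<integral>y. \<bar>G y\<bar> \<partial>lborel))"
      by (simp add: abs_mult)
    moreover have "integrable lborel (\<lambda>x. \<bar>F x\<bar> * (\<integral>y. \<bar>G y\<bar> \<partial>lborel))"
      using iF by (intro integrable_mult_left integrable_abs)
    ultimately show "integrable lborel (\<lambda>x. \<integral>y. norm (F (fst (x, y)) * G (snd (x, y))) \<partial>lborel)"
      by simp
    show "AE x in lborel. integrable lborel (\<lambda>y. F (fst (x, y)) * G (snd (x, y)))"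
      using iG by (intro AE_I2) (simp add: integrable_mult_right)
  qed
  have iH: "integrable (lborel \<Otimes>\<^sub>M lborel) (case_prod H)"
  proof (rule Bochner_Integration.integrable_bound[OF iK mH], rule AE_I2)
    fix p :: "real \<times> real"
    show "norm (case_prod H p) \<le> norm (F (fst p) * G (snd p))"
      by (cases p) (simp add: H_def abs_mult)
  qed
  have fub: "(\<integral>t. (\<integral>x. H x t \<partial>lborel) \<partial>lborel) = (\<integral>x. (\<integral>t. H x t \<partial>lborel) \<partial>lborel)"
    by (rule lborel_pair.Fubini_integral[OF iH])
  have inner1: "(\<integral>t. H x t \<partial>lborel) = I x * (df x * g x)" for x
  proof (cases "x \<in> {0..1}")
    case True
    have "(\<integral>t. H x t \<partial>lborel) = F x * (\<integral>t. G t * (if t \<le> x then 1 else 0) \<partial>lborel)"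
      unfolding H_def by simp
    also have "(\<integral>t. G t * (if t \<le> x then 1 else 0) \<partial>lborel) = (LINT t:{0..x}|lborel. dg t)"
      unfolding set_lebesgue_integral_def G_def I_def
      by (rule Bochner_Integration.integral_cong) (use True in \<open>auto simp: indicator_def\<close>)
    also have "\<dots> = g x" using hg True unfolding H10_def by auto
    finally show ?thesis by (simp add: F_def)
  next
    case False
    then show ?thesis by (simp add: H_def F_def I_def)
  qed
  have inner2: "(\<integral>x. H x t \<partial>lborel) = - I t * (f t * dg t)" for t
  proof (cases "t \<in> {0..1}")
    case True
    have "(\<integral>x. H x t \<partial>lborel) = (\<integral>x. G t * (F x * (if t \<le> x then 1 else 0)) \<partial>lborel)"
      unfolding H_def by (simp add: ac_simps)
    also have "\<dots> = G t * (\<integral>x. F x * (if t \<le> x then 1 else 0) \<partial>lborel)"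
      by simp
    also have "(\<integral>x. F x * (if t \<le> x then 1 else 0) \<partial>lborel) = (\<integral>x. F x - indicator {0..<t} x * df x \<partial>lborel)"
      unfolding F_def I_def
      by (rule Bochner_Integration.integral_cong) (use True in \<open>auto simp: indicator_def\<close>)
    also have "\<dots> = (\<integral>x. F x \<partial>lborel) - (\<integral>x. indicator {0..<t} x * df x \<partial>lborel)"
    proof (rule Bochner_Integration.integral_diff[OF iF])
      have "set_integrable lborel {0..<t} df"
        by (rule set_integrable_subset[OF L2_int[OF H10_L2d[OF hf]]]) (use True in auto)
      then show "integrable lborel (\<lambda>x. indicator {0..<t} x * df x)"
        unfolding set_integrable_def by simp
    qed
    also have "(\<integral>x. indicator {0..<t} x * df x \<partial>lborel) = (\<integral>x. indicator {0..t} x * df x \<partial>lborel)"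
    proof (rule integral_cong_AE)
      have "set_integrable lborel {0..<t} df"
        by (rule set_integrable_subset[OF L2_int[OF H10_L2d[OF hf]]]) (use True in auto)
      then show "(\<lambda>x. indicator {0..<t} x * df x) \<in> borel_measurable lborel"
        unfolding set_integrable_def by auto
      have "set_integrable lborel {0..t} df"
        by (rule set_integrable_subset[OF L2_int[OF H10_L2d[OF hf]]]) (use True in auto)
      then show "(\<lambda>x. indicator {0..t} x * df x) \<in> borel_measurable lborel"
        unfolding set_integrable_def by auto
      show "AE x in lborel. indicator {0..<t} x * df x = indicator {0..t} x * df x"
        using AE_lborel_singleton[of t] by eventually_elim (auto simp: indicator_def)
    qed
    also have "(\<integral>x. indicator {0..t} x * df x \<partial>lborel) = f t"
      using hf True unfolding H10_def set_lebesgue_integral_def by auto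
    also have "(\<integral>x. F x \<partial>lborel) = 0"
      using hf unfolding H10_def set_lebesgue_integral_def F_def I_def by auto
    finally show ?thesis by (simp add: G_def)
  next
    case False
    then show ?thesis by (simp add: H_def G_def I_def)
  qed
  have "ip df g = (\<integral>x. (\<integral>t. H x t \<partial>lborel) \<partial>lborel)"
    unfolding ip_def set_lebesgue_integral_def inner1 I_def by simp
  also have "\<dots> = (\<integral>t. (\<integral>x. H x t \<partial>lborel) \<partial>lborel)" using fub by simp
  also have "\<dots> = - ip f dg"
    unfolding ip_def set_lebesgue_integral_def inner2 I_def by simp
  finally show ?thesis by simp
qed



lemma Mh_diff: assumes "Mh n p" "Mh n q" shows "Mh n (\<lambda>x. p x - q x)"
proof -
  have "\<exists>a b. \<forall>x\<in>{real (j-1)/real n..real j/real n}. p x - q x = a + b * x" if j: "j \<in> {1..n}" for j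
  proof -
    obtain a b where ab: "\<forall>x\<in>{real (j-1)/real n..real j/real n}. p x = a + b * x"
      using assms(1) j unfolding Mh_def by blast
    obtain c d where cd: "\<forall>x\<in>{real (j-1)/real n..real j/real n}. q x = c + d * x"
      using assms(2) j unfolding Mh_def by blast
    show ?thesis
      by (rule exI[of _ "a - c"], rule exI[of _ "b - d"]) (use ab cd in \<open>auto simp: algebra_simps\<close>)
  qed
  then show ?thesis using assms unfolding Mh_def by (auto intro: continuous_on_diff)
qed

lemma poly_int:
  fixes a b c x :: real
  assumes "c \<le> x"
  shows "integral {c..x} (\<lambda>t. a + b * t) = (a*x + b*x^2/2) - (a*c + b*c^2/2)"
proof -
  have "((\<lambda>t. a + b * t) has_integral ((\<lambda>t. a*t + b*t^2/2) x - (\<lambda>t. a*t + b*t^2/2) c)) {c..x}"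
  proof (rule fundamental_theorem_of_calculus[OF assms])
    fix t assume "t \<in> {c..x}"
    have "((\<lambda>t. a*t + b*t^2/2) has_real_derivative (a + b * t)) (at t within {c..x})"
      by (auto intro!: derivative_eq_intros)
    then show "((\<lambda>t. a*t + b*t^2/2) has_vector_derivative (a + b * t)) (at t within {c..x})"
      unfolding has_real_derivative_iff_has_vector_derivative .
  qed
  then show ?thesis by (simp add: integral_unique)
qed

lemma constr:
  fixes eps :: real
  assumes q: "Mh n q" and hq: "H10 q dq"
  shows "\<exists>v. Vh n v \<and> H10 v (\<lambda>x. eps * dq x - q x + mean q)"
proof -
  define m where "m = mean q"
  define v where "v x = eps * q x - (LINT t:{0..x}|lborel. q t) + m * x" for x
  have Lq: "L2 q" using H10_L2[OF hq] .
  have Ldq: "L2 dq" using H10_L2d[OF hq] .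
  have cq: "continuous_on {0..1} q" using H10_cont[OF hq] .
  have sq: "set_integrable lborel {0..1} q" using L2_int[OF Lq] .
  have sdq: "set_integrable lborel {0..1} dq" using L2_int[OF Ldq] .
  have Ldv: "L2 (\<lambda>x. eps * dq x - q x + m)"
    using L2_add[OF L2_diff[OF L2_scale[OF Ldq] Lq] L2_const] .
  have veq: "v x = (LINT t:{0..x}|lborel. eps * dq t - q t + m)" if x: "x \<in> {0..1}" for x
  proof -
    have s1: "set_integrable lborel {0..x} q"
      by (rule set_integrable_subset[OF sq]) (use x in auto)
    have s2: "set_integrable lborel {0..x} dq"
      by (rule set_integrable_subset[OF sdq]) (use x in auto)
    have s3: "set_integrable lborel {0..x} (\<lambda>t. eps * dq t)" using s2 by simp
    have s4: "set_integrable lborel {0..x} (\<lambda>t. eps * dq t - q t)" using s3 s1 by (rule set_integral_diff(1))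
    have "integrable lborel (\<lambda>t. m * indicator {0..x} t)"
      by (intro integrable_mult_right integrable_real_indicator) (auto simp: emeasure_lborel_Icc_eq)
    then have s5: "set_integrable lborel {0..x} (\<lambda>t. m)"
      unfolding set_integrable_def by (simp add: mult.commute)
    have "(LINT t:{0..x}|lborel. eps * dq t - q t + m) = (LINT t:{0..x}|lborel. eps * dq t - q t) + (LINT t:{0..x}|lborel. m)"
      using s4 s5 by (rule set_integral_add(2))
    also have "(LINT t:{0..x}|lborel. eps * dq t - q t) = eps * (LINT t:{0..x}|lborel. dq t) - (LINT t:{0..x}|lborel. q t)"
      using set_integral_diff(2)[OF s3 s1] by simp
    also have "(LINT t:{0..x}|lborel. m) = m * x"
      using x by (simp add: set_integral_const)
    also have "(LINT t:{0..x}|lborel. dq t) = q x" using hq x unfolding H10_def by auto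
    finally show ?thesis unfolding v_def by simp
  qed
  have v1: "v 1 = 0"
    using hq unfolding v_def m_def mean_def H10_def by simp
  have H: "H10 v (\<lambda>x. eps * dq x - q x + m)"
    unfolding H10_def using Ldv veq v1 by blast
  have pw: "\<exists>a b c. \<forall>x\<in>{real (j-1)/real n..real j/real n}. v x = a + b * x + c * x^2" if j: "j \<in> {1..n}" for j
  proof -
    obtain a b where ab: "\<forall>x\<in>{real (j-1)/real n..real j/real n}. q x = a + b * x"
      using q j unfolding Mh_def by blast
    define c where "c = real (j-1)/real n"
    define d where "d = real j/real n"
    have n0: "n > 0" using j by auto
    have c0: "0 \<le> c" unfolding c_def by simp
    have cd: "c \<le> d" unfolding c_def d_def using j n0 by (simp add: divide_right_mono)
    have d1: "d \<le> 1" unfolding d_def using j n0 by simp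
    define K where "K = integral {0..c} q"
    have "v x = (eps * a - K + a*c + b*c^2/2) + (eps * b - a + m) * x + (- b/2) * x^2"
      if x: "x \<in> {c..d}" for x
    proof -
      have x01: "x \<in> {0..1}" using x c0 d1 by auto
      have qi: "q integrable_on {0..x}"
        by (rule integrable_continuous_interval) (rule continuous_on_subset[OF cq], use x01 in auto)
      have "(LINT t:{0..x}|lborel. q t) = integral {0..x} q"
        by (rule LINT_eq_integral[OF sq x01])
      also have "\<dots> = integral {0..c} q + integral {c..x} q"
        using Henstock_Kurzweil_Integration.integral_combine[OF c0 _ qi] x by auto
      also have "integral {c..x} q = integral {c..x} (\<lambda>t. a + b * t)"
        by (rule integral_cong) (use ab x in \<open>auto simp: c_def d_def\<close>)
      also have "\<dots> = (a*x + b*x^2/2) - (a*c + b*c^2/2)"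
        using x by (intro poly_int) auto
      finally have "(LINT t:{0..x}|lborel. q t) = K + ((a*x + b*x^2/2) - (a*c + b*c^2/2))"
        unfolding K_def .
      moreover have "q x = a + b * x" using ab x by (auto simp: c_def d_def)
      ultimately show ?thesis unfolding v_def by (simp add: algebra_simps)
    qed
    then show ?thesis unfolding c_def d_def by blast
  qed
  have "Vh n v"
    unfolding Vh_def using H10_cont[OF H] H10_zero[OF H] v1 pw by blast
  then show ?thesis using H unfolding m_def by blast
qed



lemma ip_dv:
  assumes "L2 X" "L2 dq" "L2 q"
  shows "ip X (\<lambda>x. eps * dq x - q x + m) = eps * ip X dq - ip X q + m * mean X"
proof -
  have L1: "L2 (\<lambda>x. eps * dq x)" using L2_scale[OF assms(2)] .
  have L2': "L2 (\<lambda>x. eps * dq x - q x)" using L2_diff[OF L1 assms(3)] .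
  have "ip X (\<lambda>x. eps * dq x - q x + m) = ip X (\<lambda>x. eps * dq x - q x) + ip X (\<lambda>x. m)"
    using ip_add_right[OF L2' L2_const assms(1)] .
  also have "ip X (\<lambda>x. eps * dq x - q x) = ip X (\<lambda>x. eps * dq x) - ip X q"
    using ip_diff_right[OF L1 assms(3) assms(1)] .
  finally show ?thesis by (simp add: ip_scale_right ip_const_right)
qed

definition Qf :: "real \<Rightarrow> (real \<Rightarrow> real) \<Rightarrow> (real \<Rightarrow> real) \<Rightarrow> real" where
  "Qf eps w dw = eps^2 * ip dw dw + ip w w - (mean w)^2"

lemma snorm_Qf: "snorm eps w dw = sqrt (Qf eps w dw)"
  unfolding snorm_def Qf_def L2norm_def using ip_nonneg by simp

lemma Qf_expand:
  assumes "H10 e de" "H10 q dq"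
  shows "Qf eps (\<lambda>x. e x + q x) (\<lambda>x. de x + dq x) =
         Qf eps e de + 2 * (eps^2 * ip de dq + ip e q - mean e * mean q) + Qf eps q dq"
proof -
  have Le: "L2 e" "L2 de" "L2 q" "L2 dq" using assms H10_L2 H10_L2d by blast+
  have a: "ip (\<lambda>x. de x + dq x) (\<lambda>x. de x + dq x) = ip de de + 2 * ip de dq + ip dq dq"
    using ip_add_left[OF Le(2) Le(4) L2_add[OF Le(2) Le(4)]] ip_add_right[OF Le(2) Le(4) Le(2)]
      ip_add_right[OF Le(2) Le(4) Le(4)] ip_sym[of dq de] by simp
  have b: "ip (\<lambda>x. e x + q x) (\<lambda>x. e x + q x) = ip e e + 2 * ip e q + ip q q"
    using ip_add_left[OF Le(1) Le(3) L2_add[OF Le(1) Le(3)]] ip_add_right[OF Le(1) Le(3) Le(1)]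
      ip_add_right[OF Le(1) Le(3) Le(3)] ip_sym[of q e] by simp
  have c: "mean (\<lambda>x. e x + q x) = mean e + mean q" using mean_add[OF Le(1) Le(3)] .
  show ?thesis unfolding Qf_def a b c by (simp add: power2_eq_square algebra_simps)
qed

lemma Qf_nonneg: assumes "H10 q dq" shows "Qf eps q dq \<ge> 0"
  using var_nonneg[OF H10_L2[OF assms]] ip_nonneg[of dq] unfolding Qf_def
  by (smt (verit) zero_le_power2 mult_nonneg_nonneg)



theorem theorem3p2:
  fixes eps :: real and f u du uh duh wh dwh uI duI :: "real \<Rightarrow> real" and n :: nat
  assumes eps: "eps > 0"
    and f: "continuous_on {0..1} f"
    and u: "H10 u du"
    and u_eq: "\<And>v dv. H10 v dv \<Longrightarrow> eps * ip du dv + ip du v = ip f v"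
    and n: "n \<ge> 2"
    and uh: "Mh n uh" "H10 uh duh"
    and wh: "Vh n wh" "H10 wh dwh"
    and eq1: "\<And>v dv. Vh n v \<Longrightarrow> H10 v dv \<Longrightarrow>
               ip dwh dv + eps * ip duh dv + ip duh v = ip f v"
    and eq2: "\<And>q dq. Mh n q \<Longrightarrow> H10 q dq \<Longrightarrow>
               eps * ip dq dwh + ip dq wh = 0"
    and uI: "Mh n uI" "H10 uI duI" "\<And>j. j \<le> n \<Longrightarrow> uI (real j / real n) = u (real j / real n)"
  shows "snorm eps (\<lambda>x. u x - uh x) (\<lambda>x. du x - duh x)
           \<le> Inf {snorm eps (\<lambda>x. u x - p x) (\<lambda>x. du x - dp x) | p dp. Mh n p \<and> H10 p dp}
       \<and> Inf {snorm eps (\<lambda>x. u x - p x) (\<lambda>x. du x - dp x) | p dp. Mh n p \<and> H10 p dp}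
           \<le> snorm eps (\<lambda>x. u x - uI x) (\<lambda>x. du x - duI x)"
proof -
  define e where "e x = u x - uh x" for x
  define de where "de x = du x - duh x" for x
  have He: "H10 e de" unfolding e_def de_def using H10_diff[OF u uh(2)] .
  have best: "snorm eps e de \<le> snorm eps (\<lambda>x. u x - p x) (\<lambda>x. du x - dp x)"
    if p: "Mh n p" "H10 p dp" for p dp
  proof -
    define q where "q x = uh x - p x" for x
    define dq where "dq x = duh x - dp x" for x
    have Mq: "Mh n q" unfolding q_def using Mh_diff[OF uh(1) p(1)] .
    have Hq: "H10 q dq" unfolding q_def dq_def using H10_diff[OF uh(2) p(2)] .
    define m where "m = mean q"
    define dv where "dv x = eps * dq x - q x + m" for x
    obtain v where Vv: "Vh n v" and Hv: "H10 v dv"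
      using constr[OF Mq Hq, of eps] unfolding dv_def m_def by blast
    have Lq: "L2 q" "L2 dq" using Hq H10_L2 H10_L2d by blast+
    have Lu: "L2 du" "L2 duh" "L2 dwh" "L2 de" "L2 e" "L2 wh"
      using u uh(2) wh(2) He H10_L2 H10_L2d by blast+
    have Lv: "L2 v" "L2 dv" using Hv H10_L2 H10_L2d by blast+
    have dvf: "dv = (\<lambda>x. eps * dq x - q x + m)" unfolding dv_def by simp
    have i1: "ip dwh dv + eps * ip duh dv + ip duh v = ip f v" using eq1[OF Vv Hv] .
    have i2: "eps * ip du dv + ip du v = ip f v" using u_eq[OF Hv] .
    have i3: "eps * ip dq dwh + ip dq wh = 0" using eq2[OF Mq Hq] .
    have i4: "ip dwh q + ip wh dq = 0" using ibp[OF wh(2) Hq] .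
    have i5: "ip de v + ip e dv = 0" using ibp[OF He Hv] .
    have i6: "ip de q + ip e dq = 0" using ibp[OF He Hq] .
    have m1: "mean dwh = 0" "mean de = 0" using H10_mean_deriv wh(2) He by blast+
    have ddv: "ip de dv = ip du dv - ip duh dv" unfolding de_def using ip_diff_left[OF Lu(1) Lu(2) Lv(2)] .
    have ddv2: "ip de v = ip du v - ip duh v" unfolding de_def using ip_diff_left[OF Lu(1) Lu(2) Lv(1)] .
    have A: "ip dwh dv = eps * ip de dv + ip de v"
    proof -
      have "eps * ip de dv = eps * ip du dv - eps * ip duh dv" using ddv by (simp add: right_diff_distrib)
      then show ?thesis using i1 i2 ddv2 by linarith
    qed
    have B: "ip dwh dv = 0"
    proof -
      have "ip dwh dv = eps * ip dwh dq - ip dwh q + m * mean dwh"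
        unfolding dvf by (rule ip_dv[OF Lu(3) Lq(2) Lq(1)])
      also have "\<dots> = eps * ip dq dwh + ip dq wh"
        using m1 i4 ip_sym[of dwh dq] ip_sym[of wh dq] by simp
      finally show ?thesis using i3 by simp
    qed
    have C: "ip de dv = eps * ip de dq - ip de q"
      unfolding dvf using ip_dv[OF Lu(4) Lq(2) Lq(1), of eps m] m1 by simp
    have D: "ip e dv = eps * ip e dq - ip e q + m * mean e"
      unfolding dvf by (rule ip_dv[OF Lu(5) Lq(2) Lq(1)])
    have key: "eps^2 * ip de dq + ip e q - mean e * mean q = 0"
    proof -
      have "0 = eps * ip de dv + ip de v" using A B by simp
      also have "\<dots> = eps * (eps * ip de dq - ip de q) - (eps * ip e dq - ip e q + m * mean e)"
      proof -
        have "eps * ip de dv = eps * (eps * ip de dq - ip de q)" using C by simp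
        moreover have "ip de v = - ip e dv" using i5 by linarith
        ultimately show ?thesis using D by linarith
      qed
      also have "\<dots> = eps^2 * ip de dq - eps * (ip de q + ip e dq) + ip e q - m * mean e"
        by (simp add: power2_eq_square algebra_simps)
      finally show ?thesis using i6 unfolding m_def by (simp add: mult.commute)
    qed
    have eqf: "(\<lambda>x. u x - p x) = (\<lambda>x. e x + q x)" "(\<lambda>x. du x - dp x) = (\<lambda>x. de x + dq x)"
      unfolding e_def q_def de_def dq_def by auto
    have "Qf eps e de \<le> Qf eps (\<lambda>x. e x + q x) (\<lambda>x. de x + dq x)"
      using Qf_expand[OF He Hq, of eps] key Qf_nonneg[OF Hq, of eps] by simp
    then show ?thesis unfolding eqf snorm_Qf by simp
  qed
  let ?S = "{snorm eps (\<lambda>x. u x - p x) (\<lambda>x. du x - dp x) | p dp. Mh n p \<and> H10 p dp}"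
  have mem: "snorm eps (\<lambda>x. u x - uI x) (\<lambda>x. du x - duI x) \<in> ?S" using uI(1,2) by blast
  have bdd: "bdd_below ?S"
  proof (rule bdd_belowI[of _ 0])
    fix y assume "y \<in> ?S"
    then obtain p dp where y: "y = snorm eps (\<lambda>x. u x - p x) (\<lambda>x. du x - dp x)" "H10 p dp" by blast
    show "0 \<le> y" unfolding y(1) snorm_Qf using Qf_nonneg[OF H10_diff[OF u y(2)]] by simp
  qed
  have "snorm eps (\<lambda>x. u x - uh x) (\<lambda>x. du x - duh x) \<le> Inf ?S"
  proof (rule cInf_greatest)
    show "?S \<noteq> {}" using mem by blast
    fix y assume "y \<in> ?S"
    then obtain p dp where "y = snorm eps (\<lambda>x. u x - p x) (\<lambda>x. du x - dp x)" "Mh n p" "H10 p dp" by blast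
    then show "snorm eps (\<lambda>x. u x - uh x) (\<lambda>x. du x - duh x) \<le> y"
      using best unfolding e_def de_def by simp
  qed
  moreover have "Inf ?S \<le> snorm eps (\<lambda>x. u x - uI x) (\<lambda>x. du x - duI x)"
    by (rule cInf_lower[OF mem bdd])
  ultimately show ?thesis by blast
qed

end
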